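(* Let $\underline{x}\le\overline{x}$, $\underline{y}\le\overline{y}$, $\underline{z}\le\overline{z}$ be real numbers and $\ell,\ell',\ell''\in\mathbb{Z}$. Let $f:[\underline{x};\overline{x}]\to[\underline{y};\overline{y}]$ and $g:[\underline{y};\overline{y}]\to[\underline{z};\overline{z}]$ be functions such that $f$ is pseudo-injective with input LSB $\ell$ and output LSB $\ell'$, and $g$ is pseudo-injective with input LSB $\ell'$ and output LSB $\ell''$. Then $g\circ f:[\underline{x};\overline{x}]\to[\underline{z};\overline{z}]$ is pseudo-injective with input LSB $\ell$ and output LSB $\ell''$.
   Context: For $\ell\in\mathbb{Z}$, write $u=2^\ell$ and, for a real $x$, $\lfloor x\rfloor_\ell = u\cdot\lfloor x/u\rfloor$ (rounding down to the nearest multiple of $2^\ell$). For a function $h:[a;b]\to\mathbb{R}$ and integers $\ell,\ell'$, the input LSB $\ell$ and output LSB $\ell'$ of $h$ are said to respect the pseudo-injectivity condition (equivalently, $h$ is pseudo-injective with input LSB $\ell$ and output LSB $\ell'$) if for all $x_1,x_2\in[a;b]$ with $\lfloor x_1\rfloor_\ell\neq\lfloor x_2\rfloor_\ell$, we have $\lfloor h(x_1)\rfloor_{\ell'}\neq\lfloor h(x_2)\rfloor_{\ell'}$ or $h(x_1)=h(x_2)$. *)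

theory Defs
  imports Complex_Main
begin

definition round_lsb :: "int \<Rightarrow> real \<Rightarrow> real" where
  "round_lsb l x = (2 powr real_of_int l) * real_of_int \<lfloor>x / (2 powr real_of_int l)\<rfloor>"

definition pseudo_injective :: "real \<Rightarrow> real \<Rightarrow> (real \<Rightarrow> real) \<Rightarrow> int \<Rightarrow> int \<Rightarrow> bool" where
  "pseudo_injective a b h l l' \<longleftrightarrow>
     (\<forall>x1\<in>{a..b}. \<forall>x2\<in>{a..b}.
        round_lsb l x1 \<noteq> round_lsb l x2 \<longrightarrow>
        round_lsb l' (h x1) \<noteq> round_lsb l' (h x2) \<or> h x1 = h x2)"

end

theory Submission
  imports Defs
begin

theorem mainTheorem1:
  fixes xl xh yl yh zl zh :: real and l l' l'' :: int and f g :: "real \<Rightarrow> real"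
  assumes "xl \<le> xh" and "yl \<le> yh" and "zl \<le> zh"
    and "f ` {xl..xh} \<subseteq> {yl..yh}"
    and "g ` {yl..yh} \<subseteq> {zl..zh}"
    and "pseudo_injective xl xh f l l'"
    and "pseudo_injective yl yh g l' l''"
  shows "(g \<circ> f) ` {xl..xh} \<subseteq> {zl..zh} \<and> pseudo_injective xl xh (g \<circ> f) l l''"
proof
  show "(g \<circ> f) ` {xl..xh} \<subseteq> {zl..zh}" using assms(4,5) by (auto simp: image_subset_iff)
next
  show "pseudo_injective xl xh (g \<circ> f) l l''"
    unfolding pseudo_injective_def
  proof (intro ballI impI)
    fix x1 x2 assume x1: "x1 \<in> {xl..xh}" and x2: "x2 \<in> {xl..xh}"
      and ne: "round_lsb l x1 \<noteq> round_lsb l x2"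
    have y1: "f x1 \<in> {yl..yh}" and y2: "f x2 \<in> {yl..yh}" using assms(4) x1 x2 by (auto simp: image_subset_iff)
    have "round_lsb l' (f x1) \<noteq> round_lsb l' (f x2) \<or> f x1 = f x2"
      using assms(6) x1 x2 ne unfolding pseudo_injective_def by blast
    then show "round_lsb l'' ((g \<circ> f) x1) \<noteq> round_lsb l'' ((g \<circ> f) x2) \<or> (g \<circ> f) x1 = (g \<circ> f) x2"
    proof
      assume "round_lsb l' (f x1) \<noteq> round_lsb l' (f x2)"
      then show ?thesis using assms(7) y1 y2 unfolding pseudo_injective_def by auto
    qed simp
  qed
qed

end
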